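(* Let $\beta>0$. For any positive integers $k,m$ there exists $M_{k,m}\in\mathbb{R}$ such that for all positive integers $i_1,\dots,i_k$, \[ \mathbb{E}\left[\frac{\Delta(H_{mi_1})}{(mi_1)^{1/(2+\beta)}}\cdots\frac{\Delta(H_{mi_k})}{(mi_k)^{1/(2+\beta)}}\right]\le M_{k,m}, \] where $\Delta(G)$ denotes the maximum degree of $G$.
   Context: Fix a real $\beta>0$ and a positive integer $m$. The random tree process $(G^n_{1,\beta})_{n\ge1}$ is defined as follows. $G^1_{1,\beta}$ consists of a single vertex $v_1$ and no edges. Given $G^n_{1,\beta}$ with vertices $v_1,\dots,v_n$ and directed edges $e_2,\dots,e_n$ (where $e_i$ is the edge whose tail is $v_i$), $G^{n+1}_{1,\beta}$ is obtained by adding a vertex $v_{n+1}$ and a directed edge $e_{n+1}$ with tail $v_{n+1}$ and head a "target vertex" determined by a random variable $f_{n+1}$, independent of $f_2,\dots,f_n$, taking values in $\Omega_{n+1}=\{(i,v):1\le i\le n\}\cup\{(i,h),(i,t):2\le i\le n\}$ with $\Pr(f_{n+1}=(i,v))=\beta/((2+\beta)n-2)$ and $\Pr(f_{n+1}=(i,h))=\Pr(f_{n+1}=(i,t))=1/((2+\beta)n-2)$. If $f_{n+1}=(i,v)$ the target is $v_i$ (chosen "uniformly"); if $f_{n+1}=(i,h)$ the target is the head of $e_i$, and if $f_{n+1}=(i,t)$ the target is the tail $v_i$ of $e_i$ (chosen "preferentially", by copying the head half-edge, resp. tail half-edge, of $e_i$). Consequently the target is $v_i$ with probability $(d_n(v_i)+\beta)/((2+\beta)n-2)$,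 where $d_n(v)$ is the degree of $v$ in $G^n_{1,\beta}$. Each edge is regarded as two half-edges, one at each endpoint; the degree of a vertex is the number of half-edges at it (loops count twice). For $t\ge1$, $H_t$ is the undirected multigraph formed from $G^t_{1,\beta}$ by identifying, for each $j<\lceil t/m\rceil$, the vertices $v_{(j-1)m+1},\dots,v_{jm}$ into one vertex $w_j$, and identifying the remaining vertices into one vertex $w_{\lceil t/m\rceil}$ (all edges kept). Known input (M\'ori): for any positive integer $k$ there exists $\tilde M_k$ such that for all $n$, $\mathbb{E}\big[\big((\Delta(G^n_{1,\beta})+\beta)/n^{1/(2+\beta)}\big)^k\big]\le\tilde M_k$. *)

theory Defs
  imports "HOL-Probability.Probability"
begin

text \<open>A tree G^n (n >= 1) on vertices v_1..v_n is encoded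
  by the list hs of length n-1 where hs ! (i-2) is (the index of) the head of edge e_i
  (the tail of e_i is v_i), for 2 <= i <= n.\<close>

datatype choice = ChV nat | ChH nat | ChT nat

definition choice_pmf :: "real \<Rightarrow> nat \<Rightarrow> choice pmf" where
  "choice_pmf \<beta> n = embed_pmf (\<lambda>c. case c of
      ChV i \<Rightarrow> (if 1 \<le> i \<and> i \<le> n then \<beta> / ((2 + \<beta>) * real n - 2) else 0)
    | ChH i \<Rightarrow> (if 2 \<le> i \<and> i \<le> n then 1 / ((2 + \<beta>) * real n - 2) else 0)
    | ChT i \<Rightarrow> (if 2 \<le> i \<and> i \<le> n then 1 / ((2 + \<beta>) * real n - 2) else 0))"

text \<open>Target vertex determined by f: (i,v) gives v_i, (i,h) the head of e_i, (i,t) the tail v_i.\<close>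
fun target :: "nat list \<Rightarrow> choice \<Rightarrow> nat" where
  "target hs (ChV i) = i"
| "target hs (ChH i) = hs ! (i - 2)"
| "target hs (ChT i) = i"

fun tree_pmf :: "real \<Rightarrow> nat \<Rightarrow> nat list pmf" where
  "tree_pmf \<beta> 0 = return_pmf []"
| "tree_pmf \<beta> (Suc n) =
     (if n = 0 then return_pmf []
      else bind_pmf (tree_pmf \<beta> n) (\<lambda>hs.
             map_pmf (\<lambda>f. hs @ [target hs f]) (choice_pmf \<beta> n)))"

definition deg :: "nat list \<Rightarrow> nat \<Rightarrow> nat" where
  "deg hs v = (\<Sum>i\<in>{2..length hs + 1}.
      (if i = v then 1 else 0) + (if hs ! (i - 2) = v then 1 else 0))"

text \<open>In H_t the vertex v_j is identified into w_(blk m t j), where the last block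
  w_(ceil(t/m)) collects all remaining vertices.\<close>
definition blk :: "nat \<Rightarrow> nat \<Rightarrow> nat \<Rightarrow> nat" where
  "blk m t j = min ((j - 1) div m + 1) ((t + m - 1) div m)"

definition maxdeg_H :: "nat \<Rightarrow> nat \<Rightarrow> nat list \<Rightarrow> nat" where
  "maxdeg_H m t hs = Max ((\<lambda>b. \<Sum>j\<in>{1..t}. if blk m t j = b then deg hs j else 0)
                          ` {1..(t + m - 1) div m})"

end

theory Submission
  imports Defs
begin


lemma bern_powr:
  fixes x g :: real
  assumes "x > 0" "g \<ge> 1"
  shows "x powr g + g * x powr (g - 1) \<le> (x + 1) powr g"
proof -
  have "\<exists>z. x < z \<and> z < x + 1 \<and> (x+1) powr g - x powr g = ((x+1) - x) * (g * z powr (g - 1))"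
    using assms by (intro MVT2) (auto intro!: has_real_derivative_powr)
  then obtain z where z: "x < z" "z < x + 1" "(x+1) powr g - x powr g = ((x+1) - x) * (g * z powr (g - 1))"
    by blast
  have "x powr (g - 1) \<le> z powr (g - 1)"
    using z assms by (intro powr_mono2) auto
  then show ?thesis using z assms by (simp add: mult_left_mono) (smt (verit) mult_left_mono)
qed

lemma rec_bound:
  fixes S :: "nat \<Rightarrow> real" and b g c :: real
  assumes S: "\<And>n. n \<ge> 1 \<Longrightarrow> S (Suc n) \<le> (1 + g / (real n - b)) * S n + c"
    and b: "0 \<le> b" "b < 1" and g: "g > 1" and c: "c \<ge> 0"
    and Spos: "\<And>n. n \<ge> 1 \<Longrightarrow> S n \<ge> 0"
  shows "\<exists>A. \<forall>n\<ge>1. S n \<le> A * real n powr g"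
proof -
  define D where "D = c / (g - 1)"
  define x1 where "x1 = 1 - b"
  have x1: "x1 > 0" using b by (simp add: x1_def)
  define A where "A = (S 1 + D * x1) / x1 powr g"
  have D: "D \<ge> 0" "D * (g - 1) = c" using g c by (auto simp: D_def)
  have main: "S n \<le> A * (real n - b) powr g - D * (real n - b)" if "n \<ge> 1" for n
    using that
  proof (induction n rule: dec_induct)
    case base
    then show ?case using x1 by (simp add: A_def x1_def)
  next
    case (step n)
    define x where "x = real n - b"
    have x: "x > 0" using step b by (simp add: x_def)
    have "S (Suc n) \<le> (1 + g / x) * S n + c" using S step by (simp add: x_def)
    also have "\<dots> \<le> (1 + g / x) * (A * x powr g - D * x) + c"
      using step.IH x g by (intro add_right_mono mult_left_mono) (auto simp: x_def)
    also have "\<dots> = A * (x powr g + g * (x powr g / x)) - D * x - D * g + c"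
      using x by (simp add: field_simps)
    also have "x powr g / x = x powr (g - 1)" using x by (simp add: powr_diff)
    also have "A * (x powr g + g * x powr (g - 1)) - D * x - D * g + c
       \<le> A * (x + 1) powr g - D * (x + 1)"
    proof -
      have "A \<ge> 0" using Spos[of 1] D x1 by (simp add: A_def)
      hence "A * (x powr g + g * x powr (g - 1)) \<le> A * (x + 1) powr g"
        using bern_powr[OF x] g by (intro mult_left_mono) auto
      thus ?thesis using D by (simp add: algebra_simps)
    qed
    finally show ?case by (simp add: x_def algebra_simps)
  qed
  have "A \<ge> 0" using Spos[of 1] D x1 by (simp add: A_def)
  show ?thesis
  proof (intro exI allI impI)
    fix n :: nat assume n: "n \<ge> 1"
    have "S n \<le> A * (real n - b) powr g - D * (real n - b)" using main n by blast
    also have "\<dots> \<le> A * (real n - b) powr g" using D n b by simp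
    also have "\<dots> \<le> A * real n powr g"
      using \<open>A \<ge> 0\<close> n b g by (intro mult_left_mono powr_mono2) auto
    finally show "S n \<le> A * real n powr g" .
  qed
qed



definition cw :: "real \<Rightarrow> nat \<Rightarrow> choice \<Rightarrow> real" where
  "cw \<beta> n = (\<lambda>c. case c of
      ChV i \<Rightarrow> (if 1 \<le> i \<and> i \<le> n then \<beta> / ((2 + \<beta>) * real n - 2) else 0)
    | ChH i \<Rightarrow> (if 2 \<le> i \<and> i \<le> n then 1 / ((2 + \<beta>) * real n - 2) else 0)
    | ChT i \<Rightarrow> (if 2 \<le> i \<and> i \<le> n then 1 / ((2 + \<beta>) * real n - 2) else 0))"

definition Cset :: "nat \<Rightarrow> choice set" where
  "Cset n = ChV ` {1..n} \<union> ChH ` {2..n} \<union> ChT ` {2..n}"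

lemma Cset_finite: "finite (Cset n)" by (simp add: Cset_def)

lemma sum_Cset: "(\<Sum>c\<in>Cset n. h c) = (\<Sum>i=1..n. h (ChV i)) + (\<Sum>i=2..n. h (ChH i)) + (\<Sum>i=2..n. h (ChT i))"
proof -
  have d1: "(ChV ` {1..n} \<union> ChH ` {2..n}) \<inter> ChT ` {2..n} = {}" by auto
  have d2: "ChV ` {1..n} \<inter> ChH ` {2..n} = {}" by auto
  have "sum h (Cset n) = sum h (ChV ` {1..n} \<union> ChH ` {2..n}) + sum h (ChT ` {2..n})"
    unfolding Cset_def by (rule sum.union_disjoint[OF _ _ d1]) auto
  also have "sum h (ChV ` {1..n} \<union> ChH ` {2..n}) = sum h (ChV ` {1..n}) + sum h (ChH ` {2..n})"
    by (rule sum.union_disjoint[OF _ _ d2]) auto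
  finally show ?thesis by (simp add: sum.reindex inj_on_def)
qed

lemma D_pos: "\<beta> > 0 \<Longrightarrow> n \<ge> 1 \<Longrightarrow> (2 + \<beta>) * real n - 2 > 0"
proof -
  assume b: "\<beta> > 0" and n: "n \<ge> 1"
  have "2 + \<beta> \<le> (2 + \<beta>) * real n" using mult_left_mono[of 1 "real n" "2+\<beta>"] b n by simp
  thus ?thesis using b by linarith
qed

lemma cw_nonneg: "\<beta> > 0 \<Longrightarrow> n \<ge> 1 \<Longrightarrow> cw \<beta> n c \<ge> 0"
proof -
  assume b: "\<beta> > 0" and n: "n \<ge> 1"
  have "(2 + \<beta>) * real n - 2 > 0" using b n
    by (rule D_pos)
  thus ?thesis using b by (auto simp: cw_def split: choice.split)
qed

lemma cw_out: "c \<notin> Cset n \<Longrightarrow> cw \<beta> n c = 0"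
  by (cases c) (auto simp: cw_def Cset_def)

lemma cw_sum: "\<beta> > 0 \<Longrightarrow> n \<ge> 1 \<Longrightarrow> (\<Sum>c\<in>Cset n. cw \<beta> n c) = 1"
proof -
  assume b: "\<beta> > 0" and n: "n \<ge> 1"
  hence D: "(2 + \<beta>) * real n - 2 > 0"
    by (rule D_pos)
  have c2: "card {2..n} = n - 1" by simp
  have "(\<Sum>c\<in>Cset n. cw \<beta> n c) = real n * (\<beta> / ((2 + \<beta>) * real n - 2))
     + 2 * (real (n - 1) * (1 / ((2 + \<beta>) * real n - 2)))"
    by (simp add: sum_Cset cw_def)
  also have "\<dots> = (real n * \<beta> + 2 * real (n - 1)) / ((2 + \<beta>) * real n - 2)"
    by (simp add: add_divide_distrib)
  also have "real n * \<beta> + 2 * real (n - 1) = (2 + \<beta>) * real n - 2"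
    using n by (simp add: of_nat_diff algebra_simps)
  also have "\<dots> / ((2 + \<beta>) * real n - 2) = 1" using D by simp
  finally show ?thesis .
qed

lemma choice_eq: "choice_pmf \<beta> n = embed_pmf (cw \<beta> n)"
  by (simp add: choice_pmf_def cw_def)

lemma cw_prob: "\<beta> > 0 \<Longrightarrow> n \<ge> 1 \<Longrightarrow> (\<integral>\<^sup>+x. ennreal (cw \<beta> n x) \<partial>count_space UNIV) = 1"
  apply (subst nn_integral_count_space'[of "Cset n"])
  using cw_nonneg cw_sum by (auto simp: Cset_finite cw_out sum_ennreal)

lemma pmf_choice: "\<beta> > 0 \<Longrightarrow> n \<ge> 1 \<Longrightarrow> pmf (choice_pmf \<beta> n) c = cw \<beta> n c"
  unfolding choice_eq by (rule pmf_embed_pmf) (auto intro: cw_nonneg cw_prob)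

lemma set_choice: "\<beta> > 0 \<Longrightarrow> n \<ge> 1 \<Longrightarrow> set_pmf (choice_pmf \<beta> n) \<subseteq> Cset n"
  using pmf_choice cw_out by (metis set_pmf_iff subsetI)

lemma E_choice: "\<beta> > 0 \<Longrightarrow> n \<ge> 1 \<Longrightarrow>
   measure_pmf.expectation (choice_pmf \<beta> n) h = (\<Sum>c\<in>Cset n. h c * cw \<beta> n c)"
  by (subst integral_measure_pmf_real[of "Cset n"]) (auto simp: Cset_finite pmf_choice dest: set_choice)

lemma finite_tree: "\<beta> > 0 \<Longrightarrow> finite (set_pmf (tree_pmf \<beta> n))"
proof (induction n)
  case (Suc n)
  have "finite (set_pmf (choice_pmf \<beta> n))" if "n \<ge> 1"
    using set_choice[of \<beta> n] Cset_finite[of n] Suc.prems that finite_subset by blast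
  then show ?case
    using Suc by simp
qed simp

lemma integral_bind_pmf_fin:
  fixes f :: "'b \<Rightarrow> real" and M :: "'a pmf" and N :: "'a \<Rightarrow> 'b pmf"
  assumes M: "finite (set_pmf M)" and N: "\<And>x. x \<in> set_pmf M \<Longrightarrow> finite (set_pmf (N x))"
  shows "measure_pmf.expectation (bind_pmf M N) f = measure_pmf.expectation M (\<lambda>x. measure_pmf.expectation (N x) f)"
proof -
  define A where "A = set_pmf (bind_pmf M N)"
  have A: "finite A" unfolding A_def set_bind_pmf by (rule finite_UN_I[OF M N])
  have "measure_pmf.expectation (bind_pmf M N) f = (\<Sum>a\<in>A. f a * pmf (bind_pmf M N) a)"
    by (rule integral_measure_pmf_real[OF A]) (simp add: A_def)
  also have "\<dots> = (\<Sum>a\<in>A. f a * (\<Sum>x\<in>set_pmf M. pmf (N x) a * pmf M x))"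
    by (intro sum.cong refl arg_cong2[where f="(*)"]) (simp add: pmf_bind integral_measure_pmf_real[OF M])
  also have "\<dots> = (\<Sum>x\<in>set_pmf M. (\<Sum>a\<in>A. f a * pmf (N x) a) * pmf M x)"
    by (simp add: sum_distrib_left sum_distrib_right mult.assoc sum.swap[of _ A])
  also have "\<dots> = (\<Sum>x\<in>set_pmf M. measure_pmf.expectation (N x) f * pmf M x)"
    by (intro sum.cong refl arg_cong2[where f="(*)"] integral_measure_pmf_real[symmetric] A)
       (auto simp: A_def)
  also have "\<dots> = measure_pmf.expectation M (\<lambda>x. measure_pmf.expectation (N x) f)"
    by (rule integral_measure_pmf_real[symmetric]) (auto simp: M)
  finally show ?thesis .
qed

lemma tree_inv: "\<beta> > 0 \<Longrightarrow> hs \<in> set_pmf (tree_pmf \<beta> n) \<Longrightarrow> length hs = n - 1 \<and> (\<forall>x\<in>set hs. x \<le> n)"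
proof (induction n arbitrary: hs)
  case (Suc n)
  show ?case
  proof (cases "n = 0")
    case False
    then obtain hs0 c where h: "hs0 \<in> set_pmf (tree_pmf \<beta> n)" "c \<in> Cset n" "hs = hs0 @ [target hs0 c]"
      using Suc.prems set_choice[of \<beta> n] by auto
    have I: "length hs0 = n - 1" "\<forall>x\<in>set hs0. x \<le> n" using Suc.IH[OF Suc.prems(1) h(1)] by auto
    have "target hs0 c \<le> n"
      using h(2) I by (auto simp: Cset_def)
    then show ?thesis using h I False by auto
  qed (use Suc in auto)
qed simp



definition P :: "real \<Rightarrow> nat \<Rightarrow> nat \<Rightarrow> real" where
  "P \<beta> K d = pochhammer (real d + \<beta>) K"

definition FF :: "real \<Rightarrow> nat \<Rightarrow> nat \<Rightarrow> nat list \<Rightarrow> real" where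
  "FF \<beta> K n hs = (\<Sum>j\<in>{1..n}. P \<beta> K (deg hs j))"

definition Dl :: "real \<Rightarrow> nat \<Rightarrow> nat \<Rightarrow> nat list \<Rightarrow> nat \<Rightarrow> real" where
  "Dl \<beta> K n hs v = (if v \<in> {1..n} then P \<beta> K (deg hs v + 1) - P \<beta> K (deg hs v) else 0)"

lemma P_nonneg: "\<beta> > 0 \<Longrightarrow> P \<beta> K d \<ge> 0"
  by (simp add: P_def pochhammer_nonneg)

lemma P_step: "K \<ge> 1 \<Longrightarrow> (real d + \<beta>) * (P \<beta> K (d + 1) - P \<beta> K d) = real K * P \<beta> K d"
proof -
  assume "K \<ge> 1"
  then obtain K' where K: "K = Suc K'" by (cases K) auto
  define a where "a = real d + \<beta>"
  have h1: "P \<beta> K d = a * pochhammer (a + 1) K'" by (simp add: P_def K pochhammer_rec a_def)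
  have h2: "P \<beta> K (d + 1) = (a + 1 + real K') * pochhammer (a + 1) K'"
    by (simp add: P_def K pochhammer_rec' a_def add_ac)
  have e: "real d + \<beta> = a" by (simp add: a_def)
  show ?thesis unfolding e h1 h2 by (simp add: K algebra_simps)
qed

lemma deg_append:
  assumes "length hs = n - 1" "n \<ge> 1"
  shows "deg (hs @ [v]) j = deg hs j + (if j = n + 1 then 1 else 0) + (if v = j then 1 else 0)"
proof -
  have L: "length (hs @ [v]) + 1 = n + 1" "length hs + 1 = n" using assms by auto
  have I: "{2..n+1} = insert (n+1) {2..n}" using assms by auto
  have "deg (hs @ [v]) j = (\<Sum>i\<in>{2..n}. (if i = j then 1 else 0) + (if (hs @ [v]) ! (i - 2) = j then 1 else 0))
        + ((if n + 1 = j then 1 else 0) + (if (hs @ [v]) ! (n + 1 - 2) = j then 1 else 0))"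
    unfolding deg_def L I by (simp add: add_ac)
  also have "(\<Sum>i\<in>{2..n}. (if i = j then 1 else 0) + (if (hs @ [v]) ! (i - 2) = j then 1 else 0))
      = deg hs j"
    unfolding deg_def L using assms by (intro sum.cong refl) (auto simp: nth_append)
  also have "(hs @ [v]) ! (n + 1 - 2) = v" using assms by (simp add: nth_append)
  finally show ?thesis by auto
qed

lemma deg_out:
  assumes "length hs = n - 1" "\<forall>x\<in>set hs. x \<le> n"
  shows "deg hs (n + 1) = 0"
proof -
  have "hs ! (i - 2) \<le> n" if "i \<in> {2..n}" for i
    using assms that by (intro bspec[OF assms(2)] nth_mem) auto
  then show ?thesis unfolding deg_def using assms
    by (intro sum.neutral) (auto, fastforce)
qed

lemma FF_step:
  assumes "length hs = n - 1" "n \<ge> 1" "\<forall>x\<in>set hs. x \<le> n" "v \<le> n"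
  shows "FF \<beta> K (n + 1) (hs @ [v]) = FF \<beta> K n hs + P \<beta> K 1 + Dl \<beta> K n hs v"
proof -
  have I: "{1..n+1} = insert (n+1) {1..n}" by auto
  have "FF \<beta> K (n + 1) (hs @ [v]) = (\<Sum>j\<in>{1..n}. P \<beta> K (deg (hs @ [v]) j)) + P \<beta> K (deg (hs @ [v]) (n+1))"
    unfolding FF_def I by simp
  also have "P \<beta> K (deg (hs @ [v]) (n+1)) = P \<beta> K 1"
    using deg_append[OF assms(1,2), of v "n+1"] deg_out[OF assms(1,3)] assms(4) by simp
  also have "(\<Sum>j\<in>{1..n}. P \<beta> K (deg (hs @ [v]) j))
      = (\<Sum>j\<in>{1..n}. P \<beta> K (deg hs j) + (if v = j then P \<beta> K (deg hs j + 1) - P \<beta> K (deg hs j) else 0))"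
    using deg_append[OF assms(1,2), of v] by (intro sum.cong refl) auto
  also have "\<dots> = FF \<beta> K n hs + Dl \<beta> K n hs v"
    by (simp add: sum.distrib FF_def Dl_def sum.delta)
  finally show ?thesis by simp
qed

lemma delta_Dl: "(\<Sum>v\<in>{1..n}. if w = v then Dl \<beta> K n hs v else 0) = Dl \<beta> K n hs w"
  by (simp add: sum.delta Dl_def)

lemma deg_weight:
  assumes "length hs = n - 1" "n \<ge> 1"
  shows "(\<Sum>v\<in>{1..n}. (\<beta> + real (deg hs v)) * Dl \<beta> K n hs v)
    = \<beta> * (\<Sum>i\<in>{1..n}. Dl \<beta> K n hs i) + (\<Sum>i\<in>{2..n}. Dl \<beta> K n hs (hs ! (i - 2))) + (\<Sum>i\<in>{2..n}. Dl \<beta> K n hs i)"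
proof -
  have L: "length hs + 1 = n" using assms by simp
  have "(\<Sum>v\<in>{1..n}. (\<beta> + real (deg hs v)) * Dl \<beta> K n hs v)
     = (\<Sum>v\<in>{1..n}. \<beta> * Dl \<beta> K n hs v + (\<Sum>i\<in>{2..n}. (if i = v then Dl \<beta> K n hs v else 0)
           + (if hs ! (i - 2) = v then Dl \<beta> K n hs v else 0)))"
    unfolding deg_def L by (auto simp: algebra_simps sum_distrib_left of_nat_sum intro!: sum.cong)
  also have "\<dots> = \<beta> * (\<Sum>i\<in>{1..n}. Dl \<beta> K n hs i) + (\<Sum>i\<in>{2..n}. Dl \<beta> K n hs i) + (\<Sum>i\<in>{2..n}. Dl \<beta> K n hs (hs ! (i - 2)))"
  proof -
    have a: "(\<Sum>v\<in>{1..n}. \<Sum>i\<in>{2..n}. (if i = v then Dl \<beta> K n hs v else 0)) = (\<Sum>i\<in>{2..n}. Dl \<beta> K n hs i)"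
      by (subst sum.swap) (simp only: delta_Dl)
    have b: "(\<Sum>v\<in>{1..n}. \<Sum>i\<in>{2..n}. (if hs ! (i - 2) = v then Dl \<beta> K n hs v else 0)) = (\<Sum>i\<in>{2..n}. Dl \<beta> K n hs (hs ! (i - 2)))"
      by (subst sum.swap) (simp only: delta_Dl)
    show ?thesis using a b by (simp add: sum.distrib sum_distrib_left)
  qed
  finally show ?thesis by simp
qed



lemma E_step:
  assumes b: "\<beta> > 0" and K: "K \<ge> 1" and L: "length hs = n - 1" and n: "n \<ge> 1" and S: "\<forall>x\<in>set hs. x \<le> n"
  shows "measure_pmf.expectation (choice_pmf \<beta> n) (\<lambda>c. FF \<beta> K (n + 1) (hs @ [target hs c]))
     = (1 + real K / ((2 + \<beta>) * real n - 2)) * FF \<beta> K n hs + P \<beta> K 1"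
proof -
  define D where "D = (2 + \<beta>) * real n - 2"
  have Dp: "D > 0" using D_pos[OF b n] by (simp add: D_def)
  have tgt: "target hs c \<le> n" if "c \<in> Cset n" for c
    using that L S n by (auto simp: Cset_def)
  have "measure_pmf.expectation (choice_pmf \<beta> n) (\<lambda>c. FF \<beta> K (n + 1) (hs @ [target hs c]))
      = (\<Sum>c\<in>Cset n. FF \<beta> K (n + 1) (hs @ [target hs c]) * cw \<beta> n c)"
    by (rule E_choice[OF b n])
  also have "\<dots> = (\<Sum>c\<in>Cset n. (FF \<beta> K n hs + P \<beta> K 1) * cw \<beta> n c + Dl \<beta> K n hs (target hs c) * cw \<beta> n c)"
    using FF_step[OF L n S tgt] by (intro sum.cong refl) (simp add: algebra_simps)
  also have "\<dots> = (FF \<beta> K n hs + P \<beta> K 1) + (\<Sum>c\<in>Cset n. Dl \<beta> K n hs (target hs c) * cw \<beta> n c)"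
    by (simp add: sum.distrib sum_distrib_left[symmetric] cw_sum[OF b n])
  also have "(\<Sum>c\<in>Cset n. Dl \<beta> K n hs (target hs c) * cw \<beta> n c)
     = (\<Sum>i\<in>{1..n}. Dl \<beta> K n hs i * (\<beta> / D)) + (\<Sum>i\<in>{2..n}. Dl \<beta> K n hs (hs ! (i - 2)) * (1 / D))
       + (\<Sum>i\<in>{2..n}. Dl \<beta> K n hs i * (1 / D))"
    unfolding sum_Cset by (intro arg_cong2[where f="(+)"] sum.cong refl) (auto simp: cw_def D_def)
  also have "\<dots> = (1 / D) * (\<beta> * (\<Sum>i\<in>{1..n}. Dl \<beta> K n hs i) + (\<Sum>i\<in>{2..n}. Dl \<beta> K n hs (hs ! (i - 2)))
       + (\<Sum>i\<in>{2..n}. Dl \<beta> K n hs i))"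
    by (simp add: sum_distrib_left sum_distrib_right algebra_simps sum.distrib)
  also have "\<dots> = (1 / D) * (\<Sum>v\<in>{1..n}. (\<beta> + real (deg hs v)) * Dl \<beta> K n hs v)"
    using deg_weight[OF L n] by simp
  also have "(\<Sum>v\<in>{1..n}. (\<beta> + real (deg hs v)) * Dl \<beta> K n hs v) = real K * FF \<beta> K n hs"
    unfolding FF_def sum_distrib_left
    using P_step[OF K] by (intro sum.cong refl) (simp add: Dl_def add.commute)
  finally show ?thesis by (simp add: D_def algebra_simps)
qed

lemma E_cong_pmf:
  fixes f g :: "'a \<Rightarrow> real"
  shows "(\<And>x. x \<in> set_pmf p \<Longrightarrow> f x = g x) \<Longrightarrow> measure_pmf.expectation p f = measure_pmf.expectation p g"
  by (rule integral_cong_AE) (auto simp: AE_measure_pmf_iff)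

definition SS :: "real \<Rightarrow> nat \<Rightarrow> nat \<Rightarrow> real" where
  "SS \<beta> K n = measure_pmf.expectation (tree_pmf \<beta> n) (FF \<beta> K n)"

lemma SS_step:
  assumes b: "\<beta> > 0" and K: "K \<ge> 1" and n: "n \<ge> 1"
  shows "SS \<beta> K (Suc n) = (1 + real K / ((2 + \<beta>) * real n - 2)) * SS \<beta> K n + P \<beta> K 1"
proof -
  have fin: "finite (set_pmf (tree_pmf \<beta> n))" by (rule finite_tree[OF b])
  have finc: "finite (set_pmf (choice_pmf \<beta> n))"
    using set_choice[OF b n] Cset_finite finite_subset by blast
  have "SS \<beta> K (Suc n) = measure_pmf.expectation (tree_pmf \<beta> n)
      (\<lambda>hs. measure_pmf.expectation (choice_pmf \<beta> n) (\<lambda>c. FF \<beta> K (n + 1) (hs @ [target hs c])))"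
    unfolding SS_def using n
    by (simp add: integral_bind_pmf_fin[OF fin] finc)
  also have "\<dots> = measure_pmf.expectation (tree_pmf \<beta> n)
      (\<lambda>hs. (1 + real K / ((2 + \<beta>) * real n - 2)) * FF \<beta> K n hs + P \<beta> K 1)"
    using tree_inv[OF b] by (intro E_cong_pmf E_step[OF b K _ n]) auto
  also have "\<dots> = (1 + real K / ((2 + \<beta>) * real n - 2)) * SS \<beta> K n + P \<beta> K 1"
    unfolding SS_def
    by (simp add: integrable_measure_pmf_finite[OF fin])
  finally show ?thesis .
qed

lemma SS_nonneg: "\<beta> > 0 \<Longrightarrow> SS \<beta> K n \<ge> 0"
  unfolding SS_def FF_def by (intro integral_nonneg_AE AE_I2 sum_nonneg P_nonneg)



lemma SS_bound:
  assumes b: "\<beta> > 0" and K: "real K > 2 + \<beta>"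
  shows "\<exists>A. \<forall>n\<ge>1. SS \<beta> K n \<le> A * real n powr (real K / (2 + \<beta>))"
proof (rule rec_bound)
  have K1: "K \<ge> 1" using K b by (cases K) auto
  show "SS \<beta> K (Suc n) \<le> (1 + (real K / (2 + \<beta>)) / (real n - 2 / (2 + \<beta>))) * SS \<beta> K n + P \<beta> K 1"
    if n: "n \<ge> 1" for n
  proof -
    have eq: "(real K / (2 + \<beta>)) / (real n - 2 / (2 + \<beta>)) = real K / ((2 + \<beta>) * real n - 2)"
    proof -
      have e1: "real n - 2/(2+\<beta>) = ((2+\<beta>)*real n - 2)/(2+\<beta>)" using b by (simp add: field_simps)
      have "(2+\<beta>) \<noteq> 0" "(2+\<beta>)*real n - 2 \<noteq> 0" using b D_pos[OF b n] by auto
      thus ?thesis unfolding e1 by simp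
    qed
    show ?thesis unfolding eq using SS_step[OF b K1 n] by simp
  qed
  show "0 \<le> 2 / (2 + \<beta>)" "2 / (2 + \<beta>) < 1" "1 < real K / (2 + \<beta>)" "0 \<le> P \<beta> K 1"
    using b K by (auto simp: P_nonneg field_simps)
  show "\<And>n. n \<ge> 1 \<Longrightarrow> SS \<beta> K n \<ge> 0" using SS_nonneg[OF b] by blast
qed

lemma prefix_tree:
  assumes b: "\<beta> > 0"
  shows "1 \<le> t \<Longrightarrow> t \<le> N \<Longrightarrow> map_pmf (take (t - 1)) (tree_pmf \<beta> N) = tree_pmf \<beta> t"
proof (induction N)
  case 0 then show ?case by simp
next
  case (Suc n)
  show ?case
  proof (cases "t = Suc n")
    case True
    have "map_pmf (take (t - 1)) (tree_pmf \<beta> (Suc n)) = map_pmf id (tree_pmf \<beta> (Suc n))"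
      using tree_inv[OF b, of _ "Suc n"] True by (intro map_pmf_cong) auto
    then show ?thesis using True by (simp add: pmf.map_id)
  next
    case False
    hence tn: "t \<le> n" "n \<noteq> 0" using Suc by auto
    have "map_pmf (take (t - 1)) (tree_pmf \<beta> (Suc n))
        = bind_pmf (tree_pmf \<beta> n) (\<lambda>hs. map_pmf (\<lambda>f. take (t - 1) (hs @ [target hs f])) (choice_pmf \<beta> n))"
      using tn by (simp add: map_bind_pmf pmf.map_comp o_def)
    also have "\<dots> = bind_pmf (tree_pmf \<beta> n) (\<lambda>hs. return_pmf (take (t - 1) hs))"
    proof (intro bind_pmf_cong refl)
      fix hs assume "hs \<in> set_pmf (tree_pmf \<beta> n)"
      hence "length hs = n - 1" using tree_inv[OF b] by blast
      hence "map_pmf (\<lambda>f. take (t - 1) (hs @ [target hs f])) (choice_pmf \<beta> n)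
           = map_pmf (\<lambda>_. take (t - 1) hs) (choice_pmf \<beta> n)"
        using tn by (intro map_pmf_cong) auto
      thus "map_pmf (\<lambda>f. take (t - 1) (hs @ [target hs f])) (choice_pmf \<beta> n) = return_pmf (take (t - 1) hs)"
        by (simp add: map_pmf_const)
    qed
    also have "\<dots> = map_pmf (take (t - 1)) (tree_pmf \<beta> n)" by (simp add: map_pmf_def)
    also have "\<dots> = tree_pmf \<beta> t" using Suc tn by simp
    finally show ?thesis .
  qed
qed

lemma blk_eq: "m > 0 \<Longrightarrow> 1 \<le> j \<Longrightarrow> j \<le> t \<Longrightarrow> blk m t j = (j - 1) div m + 1"
proof -
  assume m: "m > 0" and j: "1 \<le> j" "j \<le> t"
  have "(j - 1) div m + 1 = (j - 1 + m) div m" using m by simp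
  also have "\<dots> \<le> (t + m - 1) div m" using j by (intro div_le_mono) auto
  finally show ?thesis by (simp add: blk_def)
qed

lemma block_card:
  assumes m: "m > 0"
  shows "card {j\<in>{1..t}. blk m t j = b} \<le> m"
proof -
  have "{j\<in>{1..t}. blk m t j = b} \<subseteq> (\<lambda>l. (b - 1) * m + 1 + l) ` {..<m}"
  proof
    fix j assume "j \<in> {j\<in>{1..t}. blk m t j = b}"
    hence j: "1 \<le> j" "j \<le> t" "(j - 1) div m + 1 = b" using blk_eq[OF m] by auto
    have q: "(j - 1) div m = b - 1" using j(3) by simp
    have e: "j - 1 = (b - 1) * m + (j - 1) mod m" by (metis div_mult_mod_eq q)
    hence "j = (b - 1) * m + 1 + (j - 1) mod m" using j(1) by linarith
    thus "j \<in> (\<lambda>l. (b - 1) * m + 1 + l) ` {..<m}" using m by auto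
  qed
  hence "card {j\<in>{1..t}. blk m t j = b} \<le> card ((\<lambda>l. (b - 1) * m + 1 + l) ` {..<m})"
    by (intro card_mono) auto
  also have "\<dots> \<le> m" using card_image_le[of "{..<m}"] by simp
  finally show ?thesis .
qed

lemma maxdeg_le:
  assumes m: "m > 0" and t: "t \<ge> 1"
  shows "maxdeg_H m t hs \<le> m * Max (deg hs ` {1..t})"
proof -
  define Dm where "Dm = Max (deg hs ` {1..t})"
  have "1 \<le> (t + m - 1) div m" using div_le_mono[of m "t+m-1" m] m t by simp
  hence ne: "{1..(t + m - 1) div m} \<noteq> {}" by auto
  have "(\<Sum>j\<in>{1..t}. if blk m t j = b then deg hs j else 0) \<le> m * Dm" for b
  proof -
    have "(\<Sum>j\<in>{1..t}. if blk m t j = b then deg hs j else 0) = (\<Sum>j\<in>{j\<in>{1..t}. blk m t j = b}. deg hs j)"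
      by (rule sum.inter_filter[symmetric]) simp
    also have "\<dots> \<le> card {j\<in>{1..t}. blk m t j = b} * Dm"
    proof -
      have "deg hs i \<le> Dm" if "i \<in> {1..t}" for i unfolding Dm_def using that by (intro Max_ge) auto
      thus ?thesis using sum_bounded_above[of "{j\<in>{1..t}. blk m t j = b}" "deg hs" Dm] by auto
    qed
    also have "\<dots> \<le> m * Dm" using block_card[OF m] by (intro mult_right_mono) auto
    finally show ?thesis .
  qed
  thus ?thesis unfolding maxdeg_H_def Dm_def[symmetric] using ne by (subst Max_le_iff) auto
qed

lemma pow_le_P: "\<beta> > 0 \<Longrightarrow> real d ^ K \<le> P \<beta> K d"
proof -
  assume b: "\<beta> > 0"
  have "real d ^ K = (\<Prod>i\<in>{0..<K}. real d)" by simp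
  also have "\<dots> \<le> (\<Prod>i\<in>{0..<K}. real d + \<beta> + real i)" using b by (intro prod_mono) auto
  finally show ?thesis by (simp add: P_def pochhammer_prod)
qed

lemma maxdeg_pow:
  assumes b: "\<beta> > 0" and m: "m > 0" and t: "t \<ge> 1"
  shows "real (maxdeg_H m t hs) ^ K \<le> real m ^ K * FF \<beta> K t hs"
proof -
  define Dm where "Dm = Max (deg hs ` {1..t})"
  have "Dm \<in> deg hs ` {1..t}" unfolding Dm_def using t by (intro Max_in) auto
  then obtain j0 where j0: "j0 \<in> {1..t}" "Dm = deg hs j0" by auto
  have "real (maxdeg_H m t hs) ^ K \<le> (real m * real Dm) ^ K"
    using maxdeg_le[OF m t, of hs] by (intro power_mono) (auto simp: Dm_def simp flip: of_nat_mult)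
  also have "\<dots> = real m ^ K * real Dm ^ K" by (simp add: power_mult_distrib)
  also have "real Dm ^ K \<le> P \<beta> K (deg hs j0)" using pow_le_P[OF b] j0 by simp
  also have "P \<beta> K (deg hs j0) \<le> FF \<beta> K t hs"
    unfolding FF_def using j0 P_nonneg[OF b] by (intro member_le_sum) auto
  finally show ?thesis by (simp add: mult_left_mono)
qed

lemma prod_le_sum_pow:
  fixes x :: "nat \<Rightarrow> real"
  assumes k: "k > 0" and K: "K \<ge> k" and x: "\<And>j. j < k \<Longrightarrow> x j \<ge> 0"
  shows "(\<Prod>j<k. x j) \<le> (\<Sum>j<k. 1 + x j ^ K)"
proof -
  define y where "y = Max (x ` {..<k})"
  have "y \<in> x ` {..<k}" unfolding y_def using k by (intro Max_in) auto
  then obtain j0 where j0: "j0 < k" "y = x j0" by auto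
  have xy: "x j \<le> y" if "j < k" for j unfolding y_def using that by (intro Max_ge) auto
  have y0: "y \<ge> 0" using x j0 by simp
  have "(\<Prod>j<k. x j) \<le> (\<Prod>j<k. y)" using x xy by (intro prod_mono) auto
  also have "\<dots> = y ^ k" by simp
  also have "\<dots> \<le> 1 + y ^ K"
  proof (cases "y \<le> 1")
    case True
    hence "y ^ k \<le> 1" using y0 by (simp add: power_le_one)
    thus ?thesis using y0 by (smt (verit) zero_le_power)
  next
    case False
    hence "y ^ k \<le> y ^ K" using K by (intro power_increasing) auto
    thus ?thesis by simp
  qed
  also have "\<dots> \<le> (\<Sum>j<k. 1 + x j ^ K)"
    unfolding j0(2) using member_le_sum[of j0 "{..<k}" "\<lambda>j. 1 + x j ^ K"] j0 x by auto
  finally show ?thesis .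
qed



lemma single_bound:
  assumes b: "\<beta> > 0" and m: "m > 0" and t: "1 \<le> t" "t \<le> N" and K: "K \<ge> 1"
    and A: "SS \<beta> K t \<le> A * real t powr (real K / (2 + \<beta>))"
  shows "measure_pmf.expectation (tree_pmf \<beta> N)
     (\<lambda>hs. (real (maxdeg_H m t (take (t - 1) hs)) / real t powr (1 / (2 + \<beta>))) ^ K) \<le> real m ^ K * A"
proof -
  define c where "c = real t powr (real K / (2 + \<beta>))"
  have c0: "c > 0" using t by (simp add: c_def)
  have fin: "finite (set_pmf (tree_pmf \<beta> t))" by (rule finite_tree[OF b])
  have "measure_pmf.expectation (tree_pmf \<beta> N)
     (\<lambda>hs. (real (maxdeg_H m t (take (t - 1) hs)) / real t powr (1 / (2 + \<beta>))) ^ K)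
     = measure_pmf.expectation (map_pmf (take (t - 1)) (tree_pmf \<beta> N))
     (\<lambda>hs. (real (maxdeg_H m t hs) / real t powr (1 / (2 + \<beta>))) ^ K)"
    by simp
  also have "\<dots> = measure_pmf.expectation (tree_pmf \<beta> t)
     (\<lambda>hs. real (maxdeg_H m t hs) ^ K / c)"
  proof -
    have "(real t powr (1 / (2 + \<beta>))) ^ K = c"
      using t by (simp add: c_def powr_power)
    thus ?thesis using prefix_tree[OF b t] by (simp add: power_divide)
  qed
  also have "\<dots> \<le> measure_pmf.expectation (tree_pmf \<beta> t) (\<lambda>hs. real m ^ K * FF \<beta> K t hs / c)"
    using maxdeg_pow[OF b m t(1)] c0
    by (intro integral_mono integrable_measure_pmf_finite[OF fin] divide_right_mono) auto
  also have "\<dots> = real m ^ K * SS \<beta> K t / c" by (simp add: SS_def)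
  also have "\<dots> \<le> real m ^ K * (A * c) / c"
    using A c0 by (intro divide_right_mono mult_left_mono) (auto simp: c_def)
  also have "\<dots> = real m ^ K * A" using c0 by simp
  finally show ?thesis .
qed

theorem corollary7:
  fixes \<beta> :: real and k m :: nat
  assumes "\<beta> > 0" and "k > 0" and "m > 0"
  shows "\<exists>M :: real. \<forall>i :: nat \<Rightarrow> nat. (\<forall>j<k. i j > 0) \<longrightarrow>
           measure_pmf.expectation (tree_pmf \<beta> (m * Max (i ` {..<k})))
             (\<lambda>hs. \<Prod>j<k. real (maxdeg_H m (m * i j) (take (m * i j - 1) hs))
                            / real (m * i j) powr (1 / (2 + \<beta>))) \<le> M"
proof -
  note b = assms(1) and k = assms(2) and m = assms(3)
  define K where "K = k + nat \<lceil>2 + \<beta>\<rceil>"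
  have Kk: "K \<ge> k" by (simp add: K_def)
  have K1: "K \<ge> 1" using k Kk by simp
  have "real K = real k + real (nat \<lceil>2 + \<beta>\<rceil>)" by (simp add: K_def)
  also have "real (nat \<lceil>2 + \<beta>\<rceil>) \<ge> 2 + \<beta>"
  proof -
    have "\<lceil>2 + \<beta>\<rceil> \<ge> 0" using b by simp
    hence "real (nat \<lceil>2 + \<beta>\<rceil>) = of_int \<lceil>2 + \<beta>\<rceil>" by simp
    thus ?thesis using le_of_int_ceiling[of "2 + \<beta>"] by simp
  qed
  ultimately have Kgt: "real K > 2 + \<beta>" using k by linarith
  obtain A where A: "\<And>n. n \<ge> 1 \<Longrightarrow> SS \<beta> K n \<le> A * real n powr (real K / (2 + \<beta>))"
    using SS_bound[OF b Kgt] by blast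
  show ?thesis
  proof (intro exI allI impI)
    fix i :: "nat \<Rightarrow> nat" assume ipos: "\<forall>j<k. i j > 0"
    define N where "N = m * Max (i ` {..<k})"
    have fin: "finite (set_pmf (tree_pmf \<beta> N))" by (rule finite_tree[OF b])
    have tN: "1 \<le> m * i j" "m * i j \<le> N" if "j < k" for j
    proof -
      have "i j > 0" using ipos that by blast
      thus "1 \<le> m * i j" using m by (simp add: Suc_le_eq)
      have "i j \<le> Max (i ` {..<k})" using that by (intro Max_ge) auto
      thus "m * i j \<le> N" by (simp add: N_def)
    qed
    define X where "X = (\<lambda>j hs. real (maxdeg_H m (m * i j) (take (m * i j - 1) hs))
                            / real (m * i j) powr (1 / (2 + \<beta>)))"
    have X0: "X j hs \<ge> 0" for j hs by (simp add: X_def)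
    have "measure_pmf.expectation (tree_pmf \<beta> N) (\<lambda>hs. \<Prod>j<k. X j hs)
       \<le> measure_pmf.expectation (tree_pmf \<beta> N) (\<lambda>hs. \<Sum>j<k. 1 + X j hs ^ K)"
      using prod_le_sum_pow[OF k Kk] X0
      by (intro integral_mono integrable_measure_pmf_finite[OF fin]) auto
    also have "\<dots> = (\<Sum>j<k. 1 + measure_pmf.expectation (tree_pmf \<beta> N) (\<lambda>hs. X j hs ^ K))"
      by (simp add: integrable_measure_pmf_finite[OF fin])
    also have "\<dots> \<le> (\<Sum>j<k. 1 + real m ^ K * A)"
    proof (intro sum_mono add_left_mono)
      fix j assume "j \<in> {..<k}"
      hence j: "j < k" by simp
      show "measure_pmf.expectation (tree_pmf \<beta> N) (\<lambda>hs. X j hs ^ K) \<le> real m ^ K * A"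
        unfolding X_def using single_bound[OF b m tN[OF j] K1 A[OF tN(1)[OF j]]] by simp
    qed
    finally show "measure_pmf.expectation (tree_pmf \<beta> (m * Max (i ` {..<k})))
             (\<lambda>hs. \<Prod>j<k. real (maxdeg_H m (m * i j) (take (m * i j - 1) hs))
                            / real (m * i j) powr (1 / (2 + \<beta>))) \<le> real k * (1 + real m ^ K * A)"
      by (simp add: X_def N_def)
  qed
qed

end
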